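(* For every $\epsilon>0$ there exists $n_0(\epsilon)$ such that for every integer $n>n_0(\epsilon)$ there exists a rainbow set $R\subseteq\mathbb{F}_2^n$ with $|R|\ge\left(\frac{1}{\sqrt 2}-\epsilon\right)\sqrt n$.
   Context: For $x,y\in\mathbb{F}_2^n$, the Hamming distance is $d_H(x,y)=\#\{i:x_i\neq y_i\}$. A set $R\subseteq\mathbb{F}_2^n$ is called rainbow if the $\binom{|R|}{2}$ Hamming distances $d_H(x,y)$ over unordered pairs of distinct points $x,y\in R$ are pairwise distinct. *)

theory Defs
  imports Complex_Main
begin

text \<open>Points of F_2^n are represented as boolean lists of length n.\<close>

definition cube :: "nat \<Rightarrow> bool list set" where
  "cube n = {x. length x = n}"

definition hamming :: "bool list \<Rightarrow> bool list \<Rightarrow> nat" where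
  "hamming x y = card {i. i < length x \<and> x ! i \<noteq> y ! i}"

definition rainbow :: "bool list set \<Rightarrow> bool" where
  "rainbow R \<longleftrightarrow> (\<forall>x\<in>R. \<forall>y\<in>R. \<forall>u\<in>R. \<forall>v\<in>R.
      x \<noteq> y \<longrightarrow> u \<noteq> v \<longrightarrow> {x, y} \<noteq> {u, v} \<longrightarrow> hamming x y \<noteq> hamming u v)"

end

theory Submission
  imports Defs
begin

lemma card_aux:
  fixes a1 a2 c1 c2 s t n :: nat
  assumes "a1 \<le> a2" "a2 \<le> c1" "c1 + s \<le> c2" "c2 + t \<le> n"
  shows "card {p. p < n \<and> (p<a1 \<or> (c1\<le>p \<and> p<c1+s)) \<noteq> (p<a2 \<or> (c2\<le>p \<and> p<c2+t))}
         = (a2-a1) + s + t"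
proof -
  have "{p. p < n \<and> (p<a1 \<or> (c1\<le>p \<and> p<c1+s)) \<noteq> (p<a2 \<or> (c2\<le>p \<and> p<c2+t))}
     = ({a1..<a2} \<union> {c1..<c1+s}) \<union> {c2..<c2+t}" using assms by auto
  moreover have "card (({a1..<a2} \<union> {c1..<c1+s}) \<union> {c2..<c2+t}) = (a2-a1) + s + t"
    apply (subst card_Un_disjoint) using assms apply auto[3]
    apply (subst card_Un_disjoint) using assms by auto
  ultimately show ?thesis by simp
qed

definition pt :: "nat \<Rightarrow> nat \<Rightarrow> nat \<Rightarrow> bool list" where
  "pt n k i = map (\<lambda>p. p < i*(k-1) \<or> ((k-1)*(k-1) + i*k \<le> p \<and> p < (k-1)*(k-1) + i*k + i)) [0..<n]"

lemma pt_cube: "pt n k i \<in> cube n" by (simp add: pt_def cube_def)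

lemma ham_pt:
  assumes "i < j" "j < k" "(k-1)*(k-1) + k*k \<le> n"
  shows "hamming (pt n k i) (pt n k j) = (j-i)*(k-1) + i + j"
proof -
  define B where "B = (k-1)*(k-1)"
  have "{p. p < length (pt n k i) \<and> pt n k i ! p \<noteq> pt n k j ! p} =
    {p. p < n \<and> (p < i*(k-1) \<or> (B + i*k \<le> p \<and> p < B + i*k + i)) \<noteq>
                 (p < j*(k-1) \<or> (B + j*k \<le> p \<and> p < B + j*k + j))}"
    by (auto simp: pt_def B_def)
  moreover have "i*(k-1) \<le> j*(k-1)" using assms by simp
  moreover have "j*(k-1) \<le> B + i*k"
  proof -
    have "j*(k-1) \<le> (k-1)*(k-1)" using assms by (intro mult_le_mono1) simp
    then show ?thesis unfolding B_def by (rule order_trans[OF _ le_add1])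
  qed
  moreover have "B + i*k + i \<le> B + j*k"
  proof -
    have "i*k + i < i*k + k" using assms by simp
    also have "\<dots> = (i+1)*k" by simp
    also have "\<dots> \<le> j*k" using assms by (intro mult_le_mono1) simp
    finally show ?thesis by simp
  qed
  moreover have "B + j*k + j \<le> n"
  proof -
    have "j*k + j \<le> (k-1)*k + (k-1)" using assms by (intro add_mono mult_le_mono1) auto
    also have "\<dots> \<le> k*k" using assms by (cases k) auto
    finally show ?thesis using assms B_def by simp
  qed
  ultimately show ?thesis unfolding hamming_def
    using card_aux[of "i*(k-1)" "j*(k-1)" "B + i*k" i "B + j*k" j n]
    using assms by (simp add: diff_mult_distrib)
qed

lemma core_half:
  fixes g g' i i' k :: nat
  assumes "odd k" "g*k + 2*i = g'*k + 2*i'" "i < k" "g \<le> g'"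
  shows "g = g' \<and> i = i'"
proof -
  obtain d where d: "g' = g + d" using assms(4) le_Suc_ex by blast
  have e: "d*k + 2*i' = 2*i" using assms(2) unfolding d by (simp add: algebra_simps)
  consider "d = 0" | "d = 1" | "d \<ge> 2" by linarith
  then show ?thesis
  proof cases
    case 1 then show ?thesis using e d by simp
  next
    case 2 then have "k = 2*(i - i')" using e by simp
    then show ?thesis using assms(1) by simp
  next
    case 3 then have "2*k \<le> d*k" by (intro mult_le_mono1)
    then show ?thesis using e assms(3) by linarith
  qed
qed

lemma core:
  fixes g g' i i' k :: nat
  assumes "odd k" "g*k + 2*i = g'*k + 2*i'" "i < k" "i' < k"
  shows "g = g' \<and> i = i'"
proof (cases "g \<le> g'")
  case True then show ?thesis using core_half assms by blast
next
  case False then show ?thesis using core_half[of k g' i' g i] assms by auto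
qed

lemma rewr:
  fixes i j k :: nat
  assumes "i < j" "k \<ge> 1"
  shows "(j-i)*(k-1)+i+j = (j-i)*k + 2*i"
proof -
  obtain g where g: "j = i + g" using assms le_Suc_ex less_imp_le by blast
  obtain m where m: "k = m + 1" using assms le_Suc_ex by (metis add.commute)
  show ?thesis unfolding g m by (simp add: algebra_simps)
qed

lemma ham_uniq:
  fixes i j i' j' k :: nat
  assumes "odd k" "i < j" "j < k" "i' < j'" "j' < k"
    "(j-i)*(k-1) + i + j = (j'-i')*(k-1) + i' + j'"
  shows "i = i' \<and> j = j'"
proof -
  have k: "k \<ge> 1" using assms by linarith
  have a: "(j-i)*(k-1) + i + j = (j-i)*k + 2*i" using assms k rewr by blast
  have b: "(j'-i')*(k-1) + i' + j' = (j'-i')*k + 2*i'" using assms k rewr by blast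
  have "j - i = j' - i' \<and> i = i'" using core[of k "j-i" i "j'-i'" i'] assms a b by simp
  then show ?thesis using assms by auto
qed

lemma hamming_sym: "length x = length y \<Longrightarrow> hamming x y = hamming y x"
  unfolding hamming_def by (metis)

lemma exists_R:
  assumes "odd k" "(k-1)*(k-1) + k*k \<le> n"
  shows "\<exists>R. R \<subseteq> cube n \<and> finite R \<and> rainbow R \<and> card R = k"
proof -
  let ?R = "pt n k ` {..<k}"
  have inj: "inj_on (pt n k) {..<k}"
  proof (rule inj_onI)
    fix a b assume ab: "a \<in> {..<k}" "b \<in> {..<k}" "pt n k a = pt n k b"
    show "a = b"
    proof (rule ccontr)
      assume "a \<noteq> b"
      then consider "a < b" | "b < a" by linarith
      then show False
      proof cases
        case 1
        have "hamming (pt n k a) (pt n k b) = 0" using ab by (simp add: hamming_def)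
        then show False using ham_pt[OF 1, of k n] ab assms 1 by simp
      next
        case 2
        have "hamming (pt n k b) (pt n k a) = 0" using ab by (simp add: hamming_def)
        then show False using ham_pt[OF 2, of k n] ab assms 2 by simp
      qed
    qed
  qed
  have len: "\<And>a. length (pt n k a) = n" by (simp add: pt_def)
  have key: "\<And>a b c e. a < b \<Longrightarrow> b < k \<Longrightarrow> c < e \<Longrightarrow> e < k \<Longrightarrow>
      hamming (pt n k a) (pt n k b) = hamming (pt n k c) (pt n k e) \<Longrightarrow> a = c \<and> b = e"
    using ham_pt ham_uniq assms by metis
  have key2: "\<And>a b c e. a \<noteq> b \<Longrightarrow> c \<noteq> e \<Longrightarrow> a < k \<Longrightarrow> b < k \<Longrightarrow> c < k \<Longrightarrow> e < k \<Longrightarrow>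
      hamming (pt n k a) (pt n k b) = hamming (pt n k c) (pt n k e) \<Longrightarrow> {a,b} = {c,e}"
  proof -
    fix a b c e assume h: "a \<noteq> b" "c \<noteq> e" "a < k" "b < k" "c < k" "e < k"
      "hamming (pt n k a) (pt n k b) = hamming (pt n k c) (pt n k e)"
    have s1: "hamming (pt n k a) (pt n k b) = hamming (pt n k b) (pt n k a)"
      using hamming_sym len by metis
    have s2: "hamming (pt n k c) (pt n k e) = hamming (pt n k e) (pt n k c)"
      using hamming_sym len by metis
    show "{a,b} = {c,e}"
    proof (cases "a < b")
      case True
      show ?thesis
      proof (cases "c < e")
        case True then show ?thesis using key[of a b c e] h \<open>a<b\<close> by auto
      next
        case False then show ?thesis using key[of a b e c] h \<open>a<b\<close> s2 by auto
      qed
    next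
      case False
      show ?thesis
      proof (cases "c < e")
        case True then show ?thesis using key[of b a c e] h \<open>\<not>a<b\<close> s1 by auto
      next
        case False then show ?thesis using key[of b a e c] h \<open>\<not>a<b\<close> s1 s2 by auto
      qed
    qed
  qed
  have "rainbow ?R"
    unfolding rainbow_def
  proof (intro ballI impI)
    fix x y u v assume m: "x \<in> ?R" "y \<in> ?R" "u \<in> ?R" "v \<in> ?R"
      and d: "x \<noteq> y" "u \<noteq> v" "{x, y} \<noteq> {u, v}"
    obtain a b c e where abce: "a < k" "b < k" "c < k" "e < k"
      "x = pt n k a" "y = pt n k b" "u = pt n k c" "v = pt n k e" using m by auto
    show "hamming x y \<noteq> hamming u v"
    proof
      assume "hamming x y = hamming u v"
      then have "{a,b} = {c,e}" using key2[of a b c e] abce d by auto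
      then have "{x,y} = {u,v}" using abce by (auto simp: doubleton_eq_iff)
      then show False using d by simp
    qed
  qed
  moreover have "card ?R = k" using card_image[OF inj] by simp
  moreover have "?R \<subseteq> cube n" using pt_cube by auto
  ultimately show ?thesis by blast
qed

lemma main_n:
  fixes \<epsilon> :: real and n :: nat
  assumes e: "\<epsilon> > 0" and n: "real n > 16 / \<epsilon>^2" "n \<ge> 2"
  shows "\<exists>R. R \<subseteq> cube n \<and> finite R \<and> rainbow R \<and>
         real (card R) \<ge> (1 / sqrt 2 - \<epsilon>) * sqrt (real n)"
proof -
  define t where "t = nat \<lfloor>sqrt (real n / 2)\<rfloor>"
  define k where "k = (if odd t then t else t - 1)"
  have s1: "sqrt (real n / 2) \<ge> 1" using n by simp
  have tle: "real t \<le> sqrt (real n / 2)" unfolding t_def using s1 by linarith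
  have tge: "real t > sqrt (real n / 2) - 1" unfolding t_def using s1 by linarith
  have t1: "t \<ge> 1" using tge s1 by linarith
  have kodd: "odd k" using t1 unfolding k_def by (cases "odd t") auto
  have kt: "k \<le> t" "real k \<ge> real t - 1" unfolding k_def by auto
  have "real (t*t) \<le> real n / 2"
  proof -
    have "real t * real t \<le> sqrt (real n / 2) * sqrt (real n / 2)"
      using tle by (intro mult_mono) auto
    also have "\<dots> = real n / 2" by simp
    finally show ?thesis by simp
  qed
  then have "2*(t*t) \<le> n" by linarith
  moreover have "(k-1)*(k-1) + k*k \<le> 2*(t*t)"
  proof -
    have "(k-1)*(k-1) \<le> t*t" "k*k \<le> t*t" using kt by (auto intro: mult_le_mono)
    then show ?thesis by linarith
  qed
  ultimately have "(k-1)*(k-1) + k*k \<le> n" by linarith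
  then obtain R where R: "R \<subseteq> cube n" "finite R" "rainbow R" "card R = k"
    using exists_R kodd by blast
  have sq: "sqrt (real n / 2) = sqrt (real n) / sqrt 2" by (simp add: real_sqrt_divide)
  have "\<epsilon> * sqrt (real n) \<ge> 2"
  proof -
    have "sqrt (real n) > sqrt (16 / \<epsilon>^2)" using n(1) by simp
    moreover have "sqrt (16 / \<epsilon>^2) = 4 / \<epsilon>" using e
      by (simp add: real_sqrt_divide)
    ultimately have "sqrt (real n) > 4 / \<epsilon>" by simp
    then have "4 < sqrt (real n) * \<epsilon>" using e by (simp add: pos_divide_less_eq)
    then show ?thesis by (simp add: mult.commute)
  qed
  then have "(1 / sqrt 2 - \<epsilon>) * sqrt (real n) \<le> sqrt (real n / 2) - 2"
    unfolding sq by (simp add: algebra_simps)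
  also have "\<dots> \<le> real k" using tge kt by linarith
  finally show ?thesis using R by auto
qed

theorem theorem1p5:
  shows "\<forall>\<epsilon>::real. \<epsilon> > 0 \<longrightarrow> (\<exists>n0::nat. \<forall>n::nat. n > n0 \<longrightarrow>
    (\<exists>R. R \<subseteq> cube n \<and> finite R \<and> rainbow R \<and>
         real (card R) \<ge> (1 / sqrt 2 - \<epsilon>) * sqrt (real n)))"
proof (intro allI impI)
  fix \<epsilon> :: real assume e: "\<epsilon> > 0"
  show "\<exists>n0::nat. \<forall>n::nat. n > n0 \<longrightarrow>
    (\<exists>R. R \<subseteq> cube n \<and> finite R \<and> rainbow R \<and>
         real (card R) \<ge> (1 / sqrt 2 - \<epsilon>) * sqrt (real n))"
  proof (rule exI[of _ "nat \<lceil>16 / \<epsilon>^2\<rceil> + 2"], intro allI impI)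
    fix n :: nat assume n: "n > nat \<lceil>16 / \<epsilon>^2\<rceil> + 2"
    have c: "16 / \<epsilon>^2 \<le> real (nat \<lceil>16 / \<epsilon>^2\<rceil>)" by (rule real_nat_ceiling_ge)
    have "real n > real (nat \<lceil>16 / \<epsilon>^2\<rceil>)" using n by linarith
    then have "real n > 16 / \<epsilon>^2" using c by linarith
    moreover have "n \<ge> 2" using n by linarith
    ultimately show "\<exists>R. R \<subseteq> cube n \<and> finite R \<and> rainbow R \<and>
         real (card R) \<ge> (1 / sqrt 2 - \<epsilon>) * sqrt (real n)" using main_n e by blast
  qed
qed

end
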